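(* Suppose Assumption A1 and Assumption A2(i) hold, let $K$ be $(\kappa,\gamma)$-strongly stable, $H=\lceil2\gamma^{-1}\log T\rceil$, and let $\{M_t\}$ be any sequence with $M_t\in\mathcal M$ for all $t$. Then for any $C>0$ and $T\ge3$, with probability at least $1-\frac{46\sigma_w\kappa_B^2\kappa^8}{C\gamma^2(1-\gamma)}$, $$\sum_{t=0}^{T-1}\big|F_t(M_{t-1-H:t})-c_t(x_t^K(M_{0:t-1}),u_t^K(M_{0:t}))\big|\le2G_cC^2(\log T)^2.$$
   Context: Linear system $x_{t+1}=Ax_t+Bu_t+w_t$, $x_0=0$; $\kappa_B:=\max\{\|B\|,1\}$; $w_s:=0$ for $s<0$. Cost functions $c_t$ fixed. $(\kappa,\gamma)$-strong stability: complex $P,Q$ with $A-BK=QPQ^{-1}$, $\|P\|\le1-\gamma$, $\|K\|,\|Q\|,\|Q^{-1}\|\le\kappa$ ($\kappa\ge1,\gamma\in(0,1)$). $A_K:=A-BK$. Assumption A1: $c_t$ convex, differentiable, $\|\nabla_xc_t(x,u)\|\le G_c\|x\|$, $\|\nabla_uc_t(x,u)\|\le G_c\|u\|$, $G_c\ge1$. Assumption A2(i): $\mathbb E\|w_t\|\le\sigma_w$. $\mathcal M:=\{M=\{M^{[0]},\dots,M^{[H-1]}\}:\|M^{[i]}\|\le2\kappa_B\kappa^3(1-\gamma)^i\}$. Disturbance-action policy at time $s$ with parameter $M_s$: $u_s=-Kx_s+\sum_{i=1}^HM_s^{[i-1]}w_{s-i}$; $x_t^K(M_{0:t-1})$ and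 $u_t^K(M_{0:t})$ are the state and input produced by applying these policies at times $0,1,\dots$ from $x_0=0$. Surrogate: $\Psi^{K,h}_{t,i}(M_{t-h:t}):=A_K^i\mathbf 1_{i\le h}+\sum_{j=0}^hA_K^jBM_{t-j}^{[i-j-1]}\mathbf 1_{i-j\in[1,H]}$; $y_t(M_{t-1-H:t-1}):=\sum_{i=0}^{2H}\Psi^{K,H}_{t-1,i}(M_{t-1-H:t-1})w_{t-1-i}$; $v_t(M_{t-1-H:t}):=-Ky_t+\sum_{i=1}^HM_t^{[i-1]}w_{t-i}$; $F_t(M_{t-1-H:t}):=c_t(y_t,v_t)$. *)

theory Defs
  imports "HOL-Analysis.Analysis" "HOL-Probability.Probability"
begin

definition mnorm :: "'a::real_normed_field ^'n::finite^'m::finite \<Rightarrow> real" where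
  "mnorm X = onorm (\<lambda>v. X *v v)"

fun mpow :: "real^'n::finite^'n \<Rightarrow> nat \<Rightarrow> real^'n^'n" where
  "mpow X 0 = mat 1"
| "mpow X (Suc k) = X ** mpow X k"

definition kappaB :: "real^'m::finite^'n::finite \<Rightarrow> real" where
  "kappaB B = max (mnorm B) 1"

definition cmat :: "real^'n::finite^'m::finite \<Rightarrow> complex^'n^'m" where
  "cmat X = (\<chi> i j. complex_of_real (X $ i $ j))"

definition strongly_stable ::
  "real^'n::finite^'n \<Rightarrow> real^'m::finite^'n \<Rightarrow> real^'n^'m \<Rightarrow> real \<Rightarrow> real \<Rightarrow> bool" where
  "strongly_stable A B K \<kappa> \<gamma> \<longleftrightarrow> \<kappa> \<ge> 1 \<and> 0 < \<gamma> \<and> \<gamma> < 1 \<and>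
     (\<exists>P Q Qi :: complex^'n^'n. Q ** Qi = mat 1 \<and> Qi ** Q = mat 1 \<and>
        cmat (A - B ** K) = Q ** P ** Qi \<and>
        mnorm P \<le> 1 - \<gamma> \<and> mnorm K \<le> \<kappa> \<and> mnorm Q \<le> \<kappa> \<and> mnorm Qi \<le> \<kappa>)"

text \<open>The set \<M>: M i stands for M^[i], i < H.\<close>
definition Mset :: "real^'m::finite^'n::finite \<Rightarrow> real \<Rightarrow> real \<Rightarrow> nat \<Rightarrow> (nat \<Rightarrow> real^'n^'m) set" where
  "Mset B \<kappa> \<gamma> H = {M. \<forall>i<H. mnorm (M i) \<le> 2 * kappaB B * \<kappa>^3 * (1 - \<gamma>)^i}"

definition wz :: "(nat \<Rightarrow> 'v::zero) \<Rightarrow> int \<Rightarrow> 'v" where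
  "wz w s = (if s < 0 then 0 else w (nat s))"

definition dac :: "real^'n::finite^'m::finite \<Rightarrow> nat \<Rightarrow> (int \<Rightarrow> nat \<Rightarrow> real^'n^'m)
    \<Rightarrow> (nat \<Rightarrow> real^'n) \<Rightarrow> int \<Rightarrow> real^'n \<Rightarrow> real^'m" where
  "dac K H M w s x = - (K *v x) + (\<Sum>i=1..H. M s (i - 1) *v wz w (s - int i))"

fun xK :: "real^'n::finite^'n \<Rightarrow> real^'m::finite^'n \<Rightarrow> real^'n^'m \<Rightarrow> nat
    \<Rightarrow> (int \<Rightarrow> nat \<Rightarrow> real^'n^'m) \<Rightarrow> (nat \<Rightarrow> real^'n) \<Rightarrow> nat \<Rightarrow> real^'n" where
  "xK A B K H M w 0 = 0"
| "xK A B K H M w (Suc s) =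
     A *v xK A B K H M w s + B *v dac K H M w (int s) (xK A B K H M w s) + w s"

definition uK :: "real^'n::finite^'n \<Rightarrow> real^'m::finite^'n \<Rightarrow> real^'n^'m \<Rightarrow> nat
    \<Rightarrow> (int \<Rightarrow> nat \<Rightarrow> real^'n^'m) \<Rightarrow> (nat \<Rightarrow> real^'n) \<Rightarrow> nat \<Rightarrow> real^'m" where
  "uK A B K H M w t = dac K H M w (int t) (xK A B K H M w t)"

definition Psi :: "real^'n::finite^'n \<Rightarrow> real^'m::finite^'n \<Rightarrow> real^'n^'m \<Rightarrow> nat
    \<Rightarrow> (int \<Rightarrow> nat \<Rightarrow> real^'n^'m) \<Rightarrow> nat \<Rightarrow> int \<Rightarrow> nat \<Rightarrow> real^'n^'n" where
  "Psi A B K H M h t i =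
     (if i \<le> h then mpow (A - B ** K) i else 0) +
     (\<Sum>j=0..h. if 1 \<le> int i - int j \<and> int i - int j \<le> int H
                then mpow (A - B ** K) j ** B ** M (t - int j) (i - j - 1) else 0)"

definition ysur :: "real^'n::finite^'n \<Rightarrow> real^'m::finite^'n \<Rightarrow> real^'n^'m \<Rightarrow> nat
    \<Rightarrow> (int \<Rightarrow> nat \<Rightarrow> real^'n^'m) \<Rightarrow> (nat \<Rightarrow> real^'n) \<Rightarrow> int \<Rightarrow> real^'n" where
  "ysur A B K H M w t =
     (\<Sum>i=0..2*H. Psi A B K H M H (t - 1) i *v wz w (t - 1 - int i))"

definition vsur :: "real^'n::finite^'n \<Rightarrow> real^'m::finite^'n \<Rightarrow> real^'n^'m \<Rightarrow> nat
    \<Rightarrow> (int \<Rightarrow> nat \<Rightarrow> real^'n^'m) \<Rightarrow> (nat \<Rightarrow> real^'n) \<Rightarrow> int \<Rightarrow> real^'m" where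
  "vsur A B K H M w t = dac K H M w t (ysur A B K H M w t)"

definition Fsur :: "(nat \<Rightarrow> real^'n::finite \<Rightarrow> real^'m::finite \<Rightarrow> real) \<Rightarrow> real^'n^'n
    \<Rightarrow> real^'m^'n \<Rightarrow> real^'n^'m \<Rightarrow> nat
    \<Rightarrow> (int \<Rightarrow> nat \<Rightarrow> real^'n^'m) \<Rightarrow> (nat \<Rightarrow> real^'n) \<Rightarrow> nat \<Rightarrow> real" where
  "Fsur c A B K H M w t = c t (ysur A B K H M w (int t)) (vsur A B K H M w (int t))"

definition A1 :: "(nat \<Rightarrow> real^'n::finite \<Rightarrow> real^'m::finite \<Rightarrow> real) \<Rightarrow> real \<Rightarrow> bool" where
  "A1 c G \<longleftrightarrow> G \<ge> 1 \<and> (\<forall>t.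
     convex_on UNIV (\<lambda>p. c t (fst p) (snd p)) \<and>
     (\<forall>x u. \<exists>gx gu. GDERIV (\<lambda>p. c t (fst p) (snd p)) (x, u) :> (gx, gu) \<and>
                    norm gx \<le> G * norm x \<and> norm gu \<le> G * norm u))"

end

theory Submission
  imports Defs
begin


lemma bl_real: "bounded_linear (\<lambda>v. (X::real^'n::finite^'m::finite) *v v)"
  by (simp add: linear_conv_bounded_linear[symmetric])
lemma bl_cpx: "bounded_linear (\<lambda>v. (X::complex^'n::finite^'m::finite) *v v)"
  by (simp add: linear_conv_bounded_linear[symmetric])

lemma mnorm_mv_r: "norm ((X::real^'n::finite^'m::finite) *v v) \<le> mnorm X * norm v"
  unfolding mnorm_def using onorm[OF bl_real] .
lemma mnorm_nonneg_r: "0 \<le> mnorm (X::real^'n::finite^'m::finite)"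
  unfolding mnorm_def using onorm_pos_le[OF bl_real] .
lemma mnorm_nonneg_c: "0 \<le> mnorm (X::complex^'n::finite^'m::finite)"
  unfolding mnorm_def using onorm_pos_le[OF bl_cpx] .
lemma mnorm_mul_c: "mnorm ((X::complex^'n::finite^'m::finite) ** (Y::complex^'k::finite^'n)) \<le> mnorm X * mnorm Y"
proof -
  have "(\<lambda>v. (X ** Y) *v v) = (\<lambda>v. X *v v) \<circ> (\<lambda>v. Y *v v)"
    by (auto simp: matrix_vector_mul_assoc)
  thus ?thesis unfolding mnorm_def using onorm_compose[OF bl_cpx bl_cpx] by simp
qed
lemma mnorm_one_c: "mnorm (mat 1 :: complex^'n::finite^'n) \<le> 1"
proof -
  have "((*v) (mat 1 :: complex^'n::finite^'n)) = (\<lambda>v. v)" by (rule ext) simp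
  thus ?thesis unfolding mnorm_def by (simp add: onorm_id_le)
qed

definition cvec :: "real^'n::finite \<Rightarrow> complex^'n" where
  "cvec v = (\<chi> i. complex_of_real (v $ i))"

lemma norm_cvec: "norm (cvec v) = norm v"
  unfolding cvec_def norm_vec_def by simp

lemma cmat_mv: "cmat X *v cvec v = cvec (X *v v)"
  unfolding cmat_def cvec_def matrix_vector_mult_def by (simp add: vec_eq_iff)

lemma mnorm_cmat: "mnorm (X::real^'n::finite^'m::finite) \<le> mnorm (cmat X)"
  unfolding mnorm_def
proof (rule onorm_bound)
  show "0 \<le> onorm ((*v) (cmat X))" using onorm_pos_le[OF bl_cpx[of "cmat X"]] by simp
  fix v :: "real^'n"
  have "norm (X *v v) = norm (cmat X *v cvec v)" by (simp add: cmat_mv norm_cvec)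
  also have "\<dots> \<le> onorm ((*v) (cmat X)) * norm (cvec v)" using onorm[OF bl_cpx[of "cmat X"]] by simp
  finally show "norm (X *v v) \<le> onorm ((*v) (cmat X)) * norm v" by (simp add: norm_cvec)
qed

lemma cmat_mul: "cmat ((X::real^'n::finite^'m::finite) ** (Y::real^'k::finite^'n)) = cmat X ** cmat Y"
  unfolding cmat_def matrix_matrix_mult_def by (simp add: vec_eq_iff)
lemma cmat_one: "cmat (mat 1 :: real^'n::finite^'n) = mat 1"
  unfolding cmat_def mat_def by (simp add: vec_eq_iff)

fun cpw :: "complex^'n::finite^'n \<Rightarrow> nat \<Rightarrow> complex^'n^'n" where
  "cpw P 0 = mat 1"
| "cpw P (Suc k) = P ** cpw P k"

lemma mnorm_cpw: "mnorm (cpw P k) \<le> mnorm P ^ k"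
proof (induction k)
  case 0 thus ?case using mnorm_one_c by simp
next
  case (Suc k)
  have "mnorm (cpw P (Suc k)) \<le> mnorm P * mnorm (cpw P k)" using mnorm_mul_c by simp
  also have "\<dots> \<le> mnorm P * mnorm P ^ k" using Suc mnorm_nonneg_c by (intro mult_left_mono) auto
  finally show ?case by simp
qed

lemma mpow_stable:
  fixes A :: "real^'n::finite^'n" and B :: "real^'m::finite^'n" and K :: "real^'n^'m"
  assumes "strongly_stable A B K \<kappa> \<gamma>"
  shows "mnorm (mpow (A - B ** K) k) \<le> \<kappa>^2 * (1 - \<gamma>)^k"
proof -
  obtain P Q Qi :: "complex^'n^'n" where h: "Q ** Qi = mat 1" "Qi ** Q = mat 1"
    "cmat (A - B ** K) = Q ** P ** Qi" "mnorm P \<le> 1 - \<gamma>" "mnorm Q \<le> \<kappa>" "mnorm Qi \<le> \<kappa>"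
    and g: "0 < \<gamma>" "\<gamma> < 1"
    using assms unfolding strongly_stable_def by blast
  have eq: "cmat (mpow (A - B ** K) k) = Q ** cpw P k ** Qi"
  proof (induction k)
    case 0 thus ?case using h by (simp add: cmat_one matrix_mul_rid)
  next
    case (Suc k)
    have "cmat (mpow (A - B ** K) (Suc k)) = (Q ** P ** Qi) ** (Q ** cpw P k ** Qi)"
      using Suc h by (simp add: cmat_mul)
    also have "\<dots> = Q ** P ** (Qi ** Q) ** cpw P k ** Qi" by (simp add: matrix_mul_assoc)
    also have "\<dots> = Q ** cpw P (Suc k) ** Qi" using h by (simp add: matrix_mul_assoc matrix_mul_rid)
    finally show ?case .
  qed
  have "mnorm (mpow (A - B ** K) k) \<le> mnorm (Q ** cpw P k ** Qi)" using mnorm_cmat eq by metis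
  also have "\<dots> \<le> mnorm Q * mnorm (cpw P k) * mnorm Qi"
    by (meson mnorm_mul_c mnorm_nonneg_c mult_right_mono order_trans)
  also have "\<dots> \<le> \<kappa> * (1-\<gamma>)^k * \<kappa>"
  proof -
    have "mnorm (cpw P k) \<le> (1-\<gamma>)^k"
      using mnorm_cpw[of P k] h(4) mnorm_nonneg_c power_mono by (meson order_trans)
    thus ?thesis using h mnorm_nonneg_c
      by (meson mult_mono order_trans zero_le_mult_iff)
  qed
  finally show ?thesis by (simp add: power2_eq_square mult_ac)
qed



definition Sd :: "nat \<Rightarrow> (int \<Rightarrow> nat \<Rightarrow> real^'n::finite^'m::finite) \<Rightarrow> (nat \<Rightarrow> real^'n) \<Rightarrow> int \<Rightarrow> real^'m" where
  "Sd H M w s = (\<Sum>i=1..H. M s (i - 1) *v wz w (s - int i))"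

definition ee :: "real^'m::finite^'n::finite \<Rightarrow> nat \<Rightarrow> (int \<Rightarrow> nat \<Rightarrow> real^'n^'m) \<Rightarrow> (nat \<Rightarrow> real^'n) \<Rightarrow> int \<Rightarrow> real^'n" where
  "ee B H M w s = wz w s + B *v Sd H M w s"

lemma mv_sum: "(X::'a::real_algebra_1^'n::finite^'m::finite) *v sum f S = (\<Sum>x\<in>S. X *v f x)"
  using linear_sum[OF matrix_vector_mul_linear[of X], of f S] by (simp add: o_def)

lemma summ_mv: "sum f S *v (v::'a::real_algebra_1^'n::finite) = (\<Sum>x\<in>S. (f x::'a^'n^'m::finite) *v v)"
proof (cases "finite S")
  case True thus ?thesis by (induction rule: finite_induct) (auto simp: matrix_vector_mult_add_rdistrib)
qed simp

lemma if_mv: "(if c then X else 0) *v v = (if c then X *v v else 0)" by simp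

lemma dac_eq: "dac K H M w s x = - (K *v x) + Sd H M w s"
  unfolding dac_def Sd_def by simp

lemma xK_Suc: "xK A B K H M w (Suc t) = (A - B ** K) *v xK A B K H M w t + ee B H M w (int t)"
  by (simp add: dac_eq ee_def wz_def algebra_simps matrix_vector_mul_assoc[symmetric])

lemma wz_neg: "s < 0 \<Longrightarrow> wz w s = 0" by (simp add: wz_def)
lemma Sd_neg: "s < 0 \<Longrightarrow> Sd H M w s = 0" by (simp add: Sd_def wz_def)
lemma ee_neg: "s < 0 \<Longrightarrow> ee B H M w s = 0" by (simp add: ee_def wz_def Sd_neg)

lemma mpow_Suc_mv: "X *v (mpow X j *v v) = mpow X (Suc j) *v v"
  by (simp add: matrix_vector_mul_assoc)

lemma xK_sum: "xK A B K H M w t = (\<Sum>j<t. mpow (A - B ** K) j *v ee B H M w (int t - 1 - int j))"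
proof (induction t)
  case 0 thus ?case by simp
next
  case (Suc t)
  have "xK A B K H M w (Suc t) = (\<Sum>j<t. mpow (A - B ** K) (Suc j) *v ee B H M w (int t - 1 - int j))
        + ee B H M w (int t)"
    by (simp only: xK_Suc Suc) (simp add: mv_sum matrix_vector_mul_assoc)
  also have "\<dots> = (\<Sum>j<Suc t. mpow (A - B ** K) j *v ee B H M w (int (Suc t) - 1 - int j))"
    by (subst sum.lessThan_Suc_shift) (simp add: add.commute diff_diff_eq[symmetric])
  finally show ?case .
qed

lemma ysur_sum: "ysur A B K H M w t = (\<Sum>j=0..H. mpow (A - B ** K) j *v ee B H M w (t - 1 - int j))"
proof -
  let ?AK = "A - B ** K"
  let ?wv = "\<lambda>i::nat. wz w (t - 1 - int i)"
  let ?c = "\<lambda>i j::nat. 1 \<le> int i - int j \<and> int i - int j \<le> int H"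
  let ?X = "\<lambda>i j::nat. mpow ?AK j ** B ** M (t - 1 - int j) (i - j - 1)"
  have y: "ysur A B K H M w t = (\<Sum>i=0..2*H. (if i \<le> H then mpow ?AK i else 0) *v ?wv i)
      + (\<Sum>i=0..2*H. \<Sum>j=0..H. (if ?c i j then ?X i j *v ?wv i else 0))"
    unfolding ysur_def Psi_def matrix_vector_mult_add_rdistrib sum.distrib summ_mv if_mv ..
  have p1: "(\<Sum>i=0..2*H. (if i \<le> H then mpow ?AK i else 0) *v ?wv i) = (\<Sum>i=0..H. mpow ?AK i *v ?wv i)"
  proof -
    have "(\<Sum>i=0..2*H. (if i \<le> H then mpow ?AK i else 0) *v ?wv i)
        = (\<Sum>i=0..2*H. (if i \<le> H then mpow ?AK i *v ?wv i else 0))"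
      by (intro sum.cong) auto
    also have "\<dots> = (\<Sum>i\<in>{i\<in>{0..2*H}. i \<le> H}. mpow ?AK i *v ?wv i)"
      by (rule sum.inter_filter[symmetric]) simp
    also have "{i\<in>{0..2*H}. i \<le> H} = {0..H}" by auto
    finally show ?thesis .
  qed
  have p2: "(\<Sum>i=0..2*H. (if ?c i j then ?X i j *v ?wv i else 0))
      = mpow ?AK j *v (B *v Sd H M w (t - 1 - int j))" if "j \<le> H" for j
  proof -
    have "(\<Sum>i=0..2*H. (if ?c i j then ?X i j *v ?wv i else 0))
        = (\<Sum>i\<in>{i\<in>{0..2*H}. ?c i j}. ?X i j *v ?wv i)"
      by (rule sum.inter_filter[symmetric]) simp
    also have "{i\<in>{0..2*H}. ?c i j} = {1+j..H+j}" using that by auto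
    also have "(\<Sum>i\<in>{1+j..H+j}. ?X i j *v ?wv i) = (\<Sum>k=1..H. ?X (k+j) j *v ?wv (k+j))"
      by (rule sum.shift_bounds_cl_nat_ivl)
    also have "\<dots> = (\<Sum>k=1..H. mpow ?AK j *v (B *v (M (t - 1 - int j) (k - 1) *v wz w (t - 1 - int j - int k))))"
      by (intro sum.cong) (auto simp: matrix_vector_mul_assoc matrix_mul_assoc algebra_simps)
    also have "\<dots> = mpow ?AK j *v (B *v Sd H M w (t - 1 - int j))"
      by (simp add: Sd_def mv_sum)
    finally show ?thesis .
  qed
  have "ysur A B K H M w t = (\<Sum>j=0..H. mpow ?AK j *v ?wv j)
      + (\<Sum>j=0..H. mpow ?AK j *v (B *v Sd H M w (t - 1 - int j)))"
    unfolding y p1 by (subst sum.swap) (simp add: p2)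
  also have "\<dots> = (\<Sum>j=0..H. mpow ?AK j *v ee B H M w (t - 1 - int j))"
    by (simp add: ee_def sum.distrib matrix_vector_right_distrib)
  finally show ?thesis .
qed



lemma sum_le_W:
  fixes g :: "int \<Rightarrow> real"
  assumes nn: "\<And>s. 0 \<le> g s" and z: "\<And>s. s < 0 \<Longrightarrow> g s = 0"
    and fI: "finite I" and inj: "inj_on h I" and lt: "\<And>i. i \<in> I \<Longrightarrow> h i < int T"
  shows "(\<Sum>i\<in>I. g (h i)) \<le> (\<Sum>s<T. g (int s))"
proof -
  have "(\<Sum>i\<in>I. g (h i)) = (\<Sum>r\<in>h ` I. g r)" by (simp add: sum.reindex[OF inj])
  also have "\<dots> = (\<Sum>r\<in>h ` I \<inter> {0..<int T}. g r) + (\<Sum>r\<in>h ` I - {0..<int T}. g r)"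
    using fI by (metis Diff_Int_distrib2 Int_Diff finite_imageI inf.idem sum.Int_Diff)
  also have "(\<Sum>r\<in>h ` I - {0..<int T}. g r) = 0"
    using lt by (intro sum.neutral) (force intro: z)
  also have "(\<Sum>r\<in>h ` I \<inter> {0..<int T}. g r) \<le> (\<Sum>r\<in>{0..<int T}. g r)"
    by (intro sum_mono2) (auto intro: nn)
  also have "(\<Sum>r\<in>{0..<int T}. g r) = (\<Sum>s<T. g (int s))"
  proof -
    have "{0..<int T} = int ` {0..<T}" by (simp add: image_int_atLeastLessThan)
    thus ?thesis by (simp add: sum.reindex atLeast0LessThan)
  qed
  finally show ?thesis by simp
qed

lemma geo_le:
  fixes \<gamma> :: real
  assumes "0 < \<gamma>" "\<gamma> < 1" "finite J"
  shows "(\<Sum>j\<in>J. (1 - \<gamma>)^j) \<le> 1 / \<gamma>"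
proof -
  obtain n where "J \<subseteq> {..<n}" using assms(3) by (meson finite_nat_iff_bounded)
  hence "(\<Sum>j\<in>J. (1 - \<gamma>)^j) \<le> (\<Sum>j<n. (1 - \<gamma>)^j)" using assms by (intro sum_mono2) (auto intro!: zero_le_power)
  also have "\<dots> = (1 - (1-\<gamma>)^n) / \<gamma>" using assms by (simp add: sum_gp_strict)
  also have "\<dots> \<le> 1 / \<gamma>" using assms by (intro divide_right_mono) auto
  finally show ?thesis .
qed

locale ctx =
  fixes A :: "real^'n::finite^'n" and B :: "real^'m::finite^'n" and K :: "real^'n^'m"
    and H :: nat and M :: "int \<Rightarrow> nat \<Rightarrow> real^'n^'m" and \<kappa> \<gamma> kb :: real
  assumes kappa: "\<kappa> \<ge> 1" and gam: "0 < \<gamma>" "\<gamma> < 1" and kb: "kb \<ge> 1" "mnorm B \<le> kb"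
    and Kn: "mnorm K \<le> \<kappa>" and Mn: "\<And>s i. i < H \<Longrightarrow> mnorm (M s i) \<le> 2*kb*\<kappa>^3"
    and Pn: "\<And>k. mnorm (mpow (A - B ** K) k) \<le> \<kappa>^2 * (1-\<gamma>)^k"
begin

abbreviation "AK \<equiv> A - B ** K"

lemma nw_le:
  assumes "s < int T"
  shows "norm (wz w s) \<le> (\<Sum>s<T. norm (w s))"
proof -
  have "(\<Sum>i\<in>{0::nat}. norm (wz w ((\<lambda>_. s) i))) \<le> (\<Sum>s<T. norm (wz w (int s)))"
    by (rule sum_le_W) (auto simp: wz_def assms)
  thus ?thesis by (simp add: wz_def)
qed

lemma Sd_le:
  assumes "s \<le> int T"
  shows "norm (Sd H M w s) \<le> 2*kb*\<kappa>^3 * (\<Sum>s<T. norm (w s))"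
proof -
  have "norm (Sd H M w s) \<le> (\<Sum>i=1..H. norm (M s (i - 1) *v wz w (s - int i)))"
    unfolding Sd_def by (rule norm_sum)
  also have "\<dots> \<le> (\<Sum>i=1..H. 2*kb*\<kappa>^3 * norm (wz w (s - int i)))"
  proof (intro sum_mono)
    fix i assume i: "i \<in> {1..H}"
    have "norm (M s (i - 1) *v wz w (s - int i)) \<le> mnorm (M s (i - 1)) * norm (wz w (s - int i))"
      by (rule mnorm_mv_r)
    also have "\<dots> \<le> 2*kb*\<kappa>^3 * norm (wz w (s - int i))"
      using Mn[of "i - 1" s] i by (intro mult_right_mono) auto
    finally show "norm (M s (i - 1) *v wz w (s - int i)) \<le> 2*kb*\<kappa>^3 * norm (wz w (s - int i))" .
  qed
  also have "\<dots> = 2*kb*\<kappa>^3 * (\<Sum>i=1..H. norm (wz w (s - int i)))" by (simp add: sum_distrib_left)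
  also have "(\<Sum>i=1..H. norm (wz w (s - int i))) \<le> (\<Sum>r<T. norm (wz w (int r)))"
    using assms by (intro sum_le_W) (auto simp: wz_def inj_on_def)
  also have "(\<Sum>r<T. norm (wz w (int r))) = (\<Sum>s<T. norm (w s))" by (simp add: wz_def)
  finally show ?thesis using kb kappa by (simp add: mult_left_mono)
qed

lemma W_nn: "0 \<le> (\<Sum>s<T. norm (w s))" by (simp add: sum_nonneg)

lemma ee_le:
  assumes "s < int T"
  shows "norm (ee B H M w s) \<le> 3*kb^2*\<kappa>^3 * (\<Sum>s<T. norm (w s))"
proof -
  define W where "W = (\<Sum>s<T. norm (w s))"
  have W0: "0 \<le> W" unfolding W_def by (rule W_nn)
  have "norm (ee B H M w s) \<le> norm (wz w s) + norm (B *v Sd H M w s)"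
    unfolding ee_def by (rule norm_triangle_ineq)
  also have "norm (B *v Sd H M w s) \<le> mnorm B * norm (Sd H M w s)" by (rule mnorm_mv_r)
  also have "mnorm B * norm (Sd H M w s) \<le> kb * (2*kb*\<kappa>^3 * W)"
  proof (rule mult_mono)
    show "norm (Sd H M w s) \<le> 2*kb*\<kappa>^3 * W" unfolding W_def using Sd_le[of s T w] assms by simp
  qed (use kb in auto)
  also have "norm (wz w s) \<le> W" unfolding W_def by (rule nw_le[OF assms])
  finally have 1: "norm (ee B H M w s) \<le> W + kb * (2*kb*\<kappa>^3 * W)" by simp
  have a: "1 \<le> kb^2" by (rule one_le_power) (use kb in auto)
  have b: "1 \<le> \<kappa>^3" by (rule one_le_power) (use kappa in auto)
  have "1*1 \<le> kb^2*\<kappa>^3" by (rule mult_mono) (use a b in auto)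
  hence "1 * W \<le> (kb^2*\<kappa>^3) * W" using W0 by (intro mult_right_mono) auto
  moreover have "kb * (2*kb*\<kappa>^3 * W) = 2 * ((kb^2*\<kappa>^3) * W)" by (simp add: power2_eq_square mult_ac)
  moreover have "3*kb^2*\<kappa>^3 * W = 3 * ((kb^2*\<kappa>^3) * W)" by (simp add: mult_ac)
  ultimately have "W + kb * (2*kb*\<kappa>^3 * W) \<le> 3*kb^2*\<kappa>^3 * W" by linarith
  with 1 show ?thesis unfolding W_def by simp
qed

lemma conv_le:
  assumes "finite J" and "\<And>j. j \<in> J \<Longrightarrow> s j < int T"
  shows "norm (\<Sum>j\<in>J. mpow AK j *v ee B H M w (s j)) \<le> 3*kb^2*\<kappa>^5 / \<gamma> * (\<Sum>s<T. norm (w s))"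
proof -
  let ?W = "\<Sum>s<T. norm (w s)"
  have "norm (\<Sum>j\<in>J. mpow AK j *v ee B H M w (s j)) \<le> (\<Sum>j\<in>J. norm (mpow AK j *v ee B H M w (s j)))"
    by (rule norm_sum)
  also have "\<dots> \<le> (\<Sum>j\<in>J. (\<kappa>^2 * (1-\<gamma>)^j) * (3*kb^2*\<kappa>^3 * ?W))"
  proof (intro sum_mono)
    fix j assume j: "j \<in> J"
    show "norm (mpow AK j *v ee B H M w (s j)) \<le> (\<kappa>^2 * (1-\<gamma>)^j) * (3*kb^2*\<kappa>^3 * ?W)"
      using mnorm_mv_r[of "mpow AK j"] Pn[of j] ee_le[OF assms(2)[OF j]] mnorm_nonneg_r[of "mpow AK j"]
      by (meson mult_mono norm_ge_zero order_trans)
  qed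
  also have "\<dots> = 3*kb^2*\<kappa>^5 * ?W * (\<Sum>j\<in>J. (1-\<gamma>)^j)"
  proof -
    have k5: "\<kappa>^5 = \<kappa>^2*\<kappa>^3" by (simp flip: power_add)
    show ?thesis unfolding sum_distrib_left[where A=J] k5 by (intro sum.cong) (auto simp: algebra_simps)
  qed
  also have "\<dots> \<le> 3*kb^2*\<kappa>^5 * ?W * (1/\<gamma>)"
    using geo_le[OF gam assms(1)] kb kappa
    by (intro mult_left_mono) (auto intro!: mult_nonneg_nonneg sum_nonneg zero_le_power)
  finally show ?thesis by simp
qed

end


context ctx begin

lemma x_le:
  assumes "t \<le> T"
  shows "norm (xK A B K H M w t) \<le> 3*kb^2*\<kappa>^5 / \<gamma> * (\<Sum>s<T. norm (w s))"
  unfolding xK_sum using assms by (intro conv_le) auto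

lemma y_le:
  assumes "t \<le> T"
  shows "norm (ysur A B K H M w (int t)) \<le> 3*kb^2*\<kappa>^5 / \<gamma> * (\<Sum>s<T. norm (w s))"
  unfolding ysur_sum using assms by (intro conv_le) auto

lemma dac_le:
  assumes "s \<le> int T"
  shows "norm (dac K H M w s x) \<le> \<kappa> * norm x + 2*kb*\<kappa>^3 * (\<Sum>s<T. norm (w s))"
proof -
  have "norm (dac K H M w s x) \<le> norm (K *v x) + norm (Sd H M w s)"
    unfolding dac_eq by (metis norm_minus_cancel norm_triangle_ineq)
  also have "norm (K *v x) \<le> \<kappa> * norm x"
    using mnorm_mv_r[of K x] Kn by (meson mult_right_mono norm_ge_zero order_trans)
  also have "norm (Sd H M w s) \<le> 2*kb*\<kappa>^3 * (\<Sum>s<T. norm (w s))" by (rule Sd_le[OF assms])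
  finally show ?thesis by simp
qed

lemma pair_le:
  assumes x: "norm x \<le> 3*kb^2*\<kappa>^5 / \<gamma> * W" and u: "norm u \<le> \<kappa> * norm x + 2*kb*\<kappa>^3 * W"
    and W0: "0 \<le> W"
  shows "norm (x, u) \<le> 8*kb^2*\<kappa>^6 / \<gamma> * W"
proof -
  define Z where "Z = kb^2*\<kappa>^6 / \<gamma> * W"
  have g: "0 < \<gamma>" "\<gamma> < 1" using gam by auto
  have k5: "\<kappa>^5 \<le> \<kappa>^6" using kappa by (intro power_increasing) auto
  have k3: "\<kappa>^3 \<le> \<kappa>^6" using kappa by (intro power_increasing) auto
  have b2: "kb \<le> kb^2" using kb by (simp add: power2_eq_square)
  have ig: "1 \<le> 1/\<gamma>" using g by simp
  have Z0: "0 \<le> Z" unfolding Z_def using W0 g by simp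
  have x1: "norm x \<le> 3 * Z"
  proof -
    have "3*kb^2*\<kappa>^5 / \<gamma> * W \<le> 3*kb^2*\<kappa>^6 / \<gamma> * W"
      using k5 W0 g by (intro mult_right_mono divide_right_mono mult_left_mono) auto
    thus ?thesis using x unfolding Z_def by simp
  qed
  have x2: "\<kappa> * norm x \<le> 3 * Z"
  proof -
    have "\<kappa> * norm x \<le> \<kappa> * (3*kb^2*\<kappa>^5 / \<gamma> * W)" using x kappa by (intro mult_left_mono) auto
    also have "\<dots> = 3*Z" unfolding Z_def by (simp add: power_Suc[symmetric] field_simps
          del: power_Suc)
    finally show ?thesis .
  qed
  have w2: "kb*\<kappa>^3 * W \<le> Z"
  proof -
    have "kb*\<kappa>^3 \<le> kb^2 * \<kappa>^6" using b2 k3 kb kappa by (intro mult_mono) auto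
    also have "\<dots> \<le> kb^2 * \<kappa>^6 * (1/\<gamma>)"
    proof -
      have "0 \<le> kb^2*\<kappa>^6" using kappa by simp
      thus ?thesis using mult_left_mono[OF ig, of "kb^2*\<kappa>^6"] by simp
    qed
    finally have "kb*\<kappa>^3 * W \<le> kb^2 * \<kappa>^6 * (1/\<gamma>) * W" using W0 by (intro mult_right_mono) auto
    thus ?thesis unfolding Z_def by simp
  qed
  have "norm (x, u) \<le> norm x + norm u" by (rule norm_Pair_le)
  also have "\<dots> \<le> 8 * Z" using x1 x2 w2 u by simp
  finally show ?thesis unfolding Z_def by simp
qed

lemma xy_diff:
  assumes "t \<le> T"
  shows "xK A B K H M w t - ysur A B K H M w (int t)
     = (\<Sum>j\<in>{Suc H..<T+H+1}. mpow AK j *v ee B H M w (int t - 1 - int j))"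
proof -
  let ?f = "\<lambda>j. mpow AK j *v ee B H M w (int t - 1 - int j)"
  have "xK A B K H M w t = (\<Sum>j<T+H+1. ?f j)"
    unfolding xK_sum using assms by (intro sum.mono_neutral_right[symmetric]) (auto simp: ee_neg)
  also have "{..<T+H+1} = {0..H} \<union> {Suc H..<T+H+1}" by auto
  also have "sum ?f \<dots> = sum ?f {0..H} + sum ?f {Suc H..<T+H+1}"
    by (rule sum.union_disjoint) auto
  finally show ?thesis unfolding ysur_sum by simp
qed

lemma tail_le:
  assumes "Suc H \<le> N"
  shows "(\<Sum>j\<in>{Suc H..<N}. (1-\<gamma>)^j) \<le> (1-\<gamma>)^(Suc H) / \<gamma>"
proof -
  have "(\<Sum>j\<in>{Suc H..<N}. (1-\<gamma>)^j) = (\<Sum>j\<in>{0 + Suc H..<(N - Suc H) + Suc H}. (1-\<gamma>)^j)"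
    using assms by simp
  also have "\<dots> = (\<Sum>i\<in>{0..<N - Suc H}. (1-\<gamma>)^(i + Suc H))" by (rule sum.shift_bounds_nat_ivl)
  also have "\<dots> = (1-\<gamma>)^(Suc H) * (\<Sum>i\<in>{0..<N - Suc H}. (1-\<gamma>)^i)"
    by (simp add: sum_distrib_left power_add mult_ac)
  also have "\<dots> \<le> (1-\<gamma>)^(Suc H) * (1/\<gamma>)"
    using geo_le[OF gam] gam by (intro mult_left_mono) auto
  finally show ?thesis by simp
qed

lemma sum_diff_le:
  "(\<Sum>t<T. norm (xK A B K H M w t - ysur A B K H M w (int t)))
     \<le> \<kappa>^2 * ((1-\<gamma>)^(Suc H) / \<gamma>) * (\<Sum>s<T. norm (ee B H M w (int s)))"
proof -
  let ?J = "{Suc H..<T+H+1}"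
  let ?E = "\<Sum>s<T. norm (ee B H M w (int s))"
  have "(\<Sum>t<T. norm (xK A B K H M w t - ysur A B K H M w (int t)))
      \<le> (\<Sum>t<T. \<Sum>j\<in>?J. \<kappa>^2 * (1-\<gamma>)^j * norm (ee B H M w (int t - 1 - int j)))"
  proof (intro sum_mono)
    fix t assume "t \<in> {..<T}"
    hence tT: "t \<le> T" by simp
    have "norm (xK A B K H M w t - ysur A B K H M w (int t))
        = norm (\<Sum>j\<in>?J. mpow AK j *v ee B H M w (int t - 1 - int j))" by (simp only: xy_diff[OF tT])
    also have "\<dots> \<le> (\<Sum>j\<in>?J. norm (mpow AK j *v ee B H M w (int t - 1 - int j)))" by (rule norm_sum)
    also have "\<dots> \<le> (\<Sum>j\<in>?J. \<kappa>^2 * (1-\<gamma>)^j * norm (ee B H M w (int t - 1 - int j)))"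
    proof (intro sum_mono)
      fix j
      show "norm (mpow AK j *v ee B H M w (int t - 1 - int j)) \<le> \<kappa>^2 * (1-\<gamma>)^j * norm (ee B H M w (int t - 1 - int j))"
        using mnorm_mv_r[of "mpow AK j"] Pn[of j] by (meson mult_right_mono norm_ge_zero order_trans)
    qed
    finally show "norm (xK A B K H M w t - ysur A B K H M w (int t))
        \<le> (\<Sum>j\<in>?J. \<kappa>^2 * (1-\<gamma>)^j * norm (ee B H M w (int t - 1 - int j)))" .
  qed
  also have "\<dots> = (\<Sum>j\<in>?J. \<kappa>^2 * (1-\<gamma>)^j * (\<Sum>t<T. norm (ee B H M w (int t - 1 - int j))))"
    by (subst sum.swap) (simp add: sum_distrib_left)
  also have "\<dots> \<le> (\<Sum>j\<in>?J. \<kappa>^2 * (1-\<gamma>)^j * ?E)"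
  proof (rule sum_mono)
    fix j
    have "(\<Sum>t<T. norm (ee B H M w (int t - 1 - int j))) \<le> ?E"
      by (rule sum_le_W) (auto simp: ee_neg inj_on_def)
    moreover have "0 \<le> \<kappa>^2 * (1-\<gamma>)^j" using gam by simp
    ultimately show "\<kappa>^2 * (1-\<gamma>)^j * (\<Sum>t<T. norm (ee B H M w (int t - 1 - int j))) \<le> \<kappa>^2 * (1-\<gamma>)^j * ?E"
      by (rule mult_left_mono)
  qed
  also have "\<dots> = \<kappa>^2 * ?E * (\<Sum>j\<in>?J. (1-\<gamma>)^j)"
    unfolding sum_distrib_left[where A="?J"] by (rule sum.cong) (auto simp: mult_ac)
  also have "\<dots> \<le> \<kappa>^2 * ?E * ((1-\<gamma>)^(Suc H) / \<gamma>)"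
    by (intro mult_left_mono tail_le) (auto intro!: sum_nonneg mult_nonneg_nonneg)
  finally show ?thesis by (simp add: mult_ac)
qed

lemma Sd_le':
  "norm (Sd H M w s) \<le> 2*kb*\<kappa>^3 * (\<Sum>i=1..H. norm (wz w (s - int i)))"
proof -
  have "norm (Sd H M w s) \<le> (\<Sum>i=1..H. norm (M s (i - 1) *v wz w (s - int i)))"
    unfolding Sd_def by (rule norm_sum)
  also have "\<dots> \<le> (\<Sum>i=1..H. 2*kb*\<kappa>^3 * norm (wz w (s - int i)))"
  proof (intro sum_mono)
    fix i assume i: "i \<in> {1..H}"
    have "norm (M s (i - 1) *v wz w (s - int i)) \<le> mnorm (M s (i - 1)) * norm (wz w (s - int i))"
      by (rule mnorm_mv_r)
    also have "\<dots> \<le> 2*kb*\<kappa>^3 * norm (wz w (s - int i))"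
      using Mn[of "i - 1" s] i by (intro mult_right_mono) auto
    finally show "norm (M s (i - 1) *v wz w (s - int i)) \<le> 2*kb*\<kappa>^3 * norm (wz w (s - int i))" .
  qed
  finally show ?thesis by (simp add: sum_distrib_left)
qed

lemma E_le:
  "(\<Sum>s<T. norm (ee B H M w (int s))) \<le> (1 + 2*kb^2*\<kappa>^3 * H) * (\<Sum>s<T. norm (w s))"
proof -
  define W where "W = (\<Sum>s<T. norm (w s))"
  have "(\<Sum>s<T. norm (ee B H M w (int s)))
      \<le> (\<Sum>s<T. norm (w s) + kb * (2*kb*\<kappa>^3 * (\<Sum>i=1..H. norm (wz w (int s - int i)))))"
  proof (intro sum_mono)
    fix s
    have "norm (ee B H M w (int s)) \<le> norm (wz w (int s)) + norm (B *v Sd H M w (int s))"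
      unfolding ee_def by (rule norm_triangle_ineq)
    also have "norm (B *v Sd H M w (int s)) \<le> mnorm B * norm (Sd H M w (int s))" by (rule mnorm_mv_r)
    also have "mnorm B * norm (Sd H M w (int s)) \<le> kb * (2*kb*\<kappa>^3 * (\<Sum>i=1..H. norm (wz w (int s - int i))))"
      by (rule mult_mono) (use kb Sd_le' in auto)
    finally show "norm (ee B H M w (int s)) \<le> norm (w s) + kb * (2*kb*\<kappa>^3 * (\<Sum>i=1..H. norm (wz w (int s - int i))))"
      by (simp add: wz_def)
  qed
  also have "\<dots> = W + 2*kb^2*\<kappa>^3 * (\<Sum>i=1..H. \<Sum>s<T. norm (wz w (int s - int i)))"
  proof -
    have sw: "(\<Sum>i=1..H. \<Sum>s<T. norm (wz w (int s - int i))) = (\<Sum>s<T. \<Sum>i=1..H. norm (wz w (int s - int i)))"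
      by (rule sum.swap)
    show ?thesis unfolding W_def sum.distrib sw by (simp add: sum_distrib_left power2_eq_square mult_ac)
  qed
  also have "(\<Sum>i=1..H. \<Sum>s<T. norm (wz w (int s - int i))) \<le> (\<Sum>i=1..H. W)"
  proof (intro sum_mono)
    fix i :: nat assume "i \<in> {1..H}"
    have "(\<Sum>s<T. norm (wz w (int s - int i))) \<le> (\<Sum>s<T. norm (wz w (int s)))"
      by (rule sum_le_W) (auto simp: wz_def inj_on_def)
    thus "(\<Sum>s<T. norm (wz w (int s - int i))) \<le> W" unfolding W_def by (simp add: wz_def)
  qed
  finally have "(\<Sum>s<T. norm (ee B H M w (int s))) \<le> W + 2*kb^2*\<kappa>^3 * (H * W)"
    using kb kappa by (simp add: mult_left_mono)
  thus ?thesis unfolding W_def by (simp add: algebra_simps)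
qed

end


lemma A1_deriv:
  assumes "A1 c G"
  shows "\<exists>D. ((\<lambda>p. c t (fst p) (snd p)) has_derivative (\<lambda>h. inner h D)) (at z) \<and> norm D \<le> G * norm z"
proof -
  obtain gx gu where g: "GDERIV (\<lambda>p. c t (fst p) (snd p)) (fst z, snd z) :> (gx, gu)"
      "norm gx \<le> G * norm (fst z)" "norm gu \<le> G * norm (snd z)"
    using assms unfolding A1_def by blast
  have G0: "0 \<le> G" using assms unfolding A1_def by simp
  have "norm (gx, gu) = sqrt ((norm gx)^2 + (norm gu)^2)" by (simp add: norm_Pair)
  also have "\<dots> \<le> sqrt ((G * norm (fst z))^2 + (G * norm (snd z))^2)"
    using g by (intro real_sqrt_le_mono add_mono power_mono) auto
  also have "\<dots> = G * sqrt ((norm (fst z))^2 + (norm (snd z))^2)"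
    using G0 by (simp add: power_mult_distrib real_sqrt_mult flip: distrib_left)
  also have "\<dots> = G * norm z" by (cases z) (simp add: norm_Pair)
  finally show ?thesis using g(1) unfolding gderiv_def by auto
qed

lemma A1_cont:
  assumes "A1 c G"
  shows "continuous_on UNIV (\<lambda>p. c t (fst p) (snd p))"
proof -
  have "\<And>z. isCont (\<lambda>p. c t (fst p) (snd p)) z"
    using A1_deriv[OF assms] has_derivative_continuous by blast
  thus ?thesis by (simp add: continuous_on_eq_continuous_at)
qed

lemma seg_norm:
  assumes "z \<in> closed_segment p q" "norm p \<le> R" "norm q \<le> R"
  shows "norm z \<le> R"
proof -
  obtain u where u: "z = (1 - u) *\<^sub>R p + u *\<^sub>R q" "0 \<le> u" "u \<le> 1"
    using assms by (auto simp add: closed_segment_def)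
  have "norm z \<le> norm ((1 - u) *\<^sub>R p) + norm (u *\<^sub>R q)" unfolding u(1) by (rule norm_triangle_ineq)
  also have "\<dots> = (1-u) * norm p + u * norm q" using u by simp
  also have "\<dots> \<le> (1-u) * R + u * R" using u assms by (intro add_mono mult_left_mono) auto
  finally show ?thesis by (simp add: algebra_simps)
qed

lemma cost_lip:
  fixes p q :: "(real^'n::finite) \<times> (real^'m::finite)"
  assumes "A1 c G" "norm p \<le> R" "norm q \<le> R"
  shows "\<bar>c t (fst p) (snd p) - c t (fst q) (snd q)\<bar> \<le> G * R * norm (p - q)"
proof -
  let ?f = "\<lambda>z::((real^'n) \<times> (real^'m)). c t (fst z) (snd z)"
  have "\<forall>z. \<exists>D. (?f has_derivative (\<lambda>h. inner h D)) (at z) \<and> norm D \<le> G * norm z"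
    using A1_deriv[OF assms(1)] by blast
  from choice[OF this] obtain D where DD: "\<forall>z. (?f has_derivative (\<lambda>h. inner h (D z))) (at z) \<and> norm (D z) \<le> G * norm z"
    by blast
  have D: "\<And>z. (?f has_derivative (\<lambda>h. inner h (D z))) (at z)" "\<And>z. norm (D z) \<le> G * norm z"
    using DD by auto
  have G0: "0 \<le> G" using assms unfolding A1_def by simp
  have "norm (?f p - ?f q) \<le> G * R * norm (p - q)"
  proof (rule differentiable_bound[where S="closed_segment q p" and f' = "\<lambda>z h. inner h (D z)"])
    fix z assume z: "z \<in> closed_segment q p"
    show "(?f has_derivative (\<lambda>h. inner h (D z))) (at z within closed_segment q p)"
      by (rule has_derivative_at_withinI[OF D(1)])
    have "onorm (\<lambda>h. inner h (D z)) \<le> norm (D z)"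
      proof (rule onorm_bound)
      fix h
      show "norm (inner h (D z)) \<le> norm (D z) * norm h"
        using Cauchy_Schwarz_ineq2[of h "D z"] by (simp add: mult.commute)
    qed simp
    also have "\<dots> \<le> G * norm z" by (rule D(2))
    also have "\<dots> \<le> G * R" using seg_norm[OF z assms(3,2)] G0 by (intro mult_left_mono) auto
    finally show "onorm (\<lambda>h. inner h (D z)) \<le> G * R" .
  qed (rule convex_closed_segment, rule ends_in_segment, rule ends_in_segment)
  thus ?thesis by simp
qed



context ctx begin

lemma det_bound:
  assumes A1: "A1 c G"
  shows "(\<Sum>t<T. \<bar>Fsur c A B K H M w t - c t (xK A B K H M w t) (uK A B K H M w t)\<bar>)
    \<le> G * (8*kb^2*\<kappa>^6/\<gamma> * (\<Sum>s<T. norm (w s))) * (2*\<kappa>) * (\<kappa>^2 * ((1-\<gamma>)^(Suc H) / \<gamma>))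
       * ((1 + 2*kb^2*\<kappa>^3 * H) * (\<Sum>s<T. norm (w s)))"
proof -
  define W where "W = (\<Sum>s<T. norm (w s))"
  define R where "R = 8*kb^2*\<kappa>^6/\<gamma> * W"
  have W0: "0 \<le> W" unfolding W_def by (rule W_nn)
  have G0: "0 \<le> G" using A1 unfolding A1_def by simp
  have R0: "0 \<le> R" unfolding R_def using W0 gam by simp
  have each: "\<bar>Fsur c A B K H M w t - c t (xK A B K H M w t) (uK A B K H M w t)\<bar>
      \<le> (G * R * (2*\<kappa>)) * norm (xK A B K H M w t - ysur A B K H M w (int t))" if t: "t < T" for t
  proof -
    let ?x = "xK A B K H M w t" and ?u = "uK A B K H M w t"
    let ?y = "ysur A B K H M w (int t)" and ?v = "vsur A B K H M w (int t)"
    have tT: "t \<le> T" "int t \<le> int T" using t by auto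
    have pq: "norm (?y, ?v) \<le> R" unfolding R_def W_def
      by (rule pair_le[OF y_le[OF tT(1)]]) (auto simp: vsur_def intro: dac_le[OF tT(2)] W_nn)
    have qq: "norm (?x, ?u) \<le> R" unfolding R_def W_def
      by (rule pair_le[OF x_le[OF tT(1)]]) (auto simp: uK_def intro: dac_le[OF tT(2)] W_nn)
    have "\<bar>c t (fst (?y, ?v)) (snd (?y, ?v)) - c t (fst (?x, ?u)) (snd (?x, ?u))\<bar> \<le> G * R * norm ((?y, ?v) - (?x, ?u))"
      by (rule cost_lip[OF A1 pq qq])
    also have "norm ((?y, ?v) - (?x, ?u)) \<le> norm (?y - ?x) + norm (?v - ?u)"
      using norm_Pair_le[of "?y - ?x" "?v - ?u"] by simp
    also have "?v - ?u = K *v (?x - ?y)"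
      by (simp add: vsur_def uK_def dac_eq matrix_vector_mult_diff_distrib)
    also have "norm (K *v (?x - ?y)) \<le> \<kappa> * norm (?x - ?y)"
      using mnorm_mv_r[of K "?x - ?y"] Kn by (meson mult_right_mono norm_ge_zero order_trans)
    also have "norm (?y - ?x) = norm (?x - ?y)" by (rule norm_minus_commute)
    finally have "\<bar>Fsur c A B K H M w t - c t ?x ?u\<bar> \<le> G * R * (norm (?x - ?y) + \<kappa> * norm (?x - ?y))"
      using G0 R0 by (simp add: Fsur_def mult_left_mono)
    also have "\<dots> \<le> G * R * (2 * \<kappa> * norm (?x - ?y))"
    proof (rule mult_left_mono)
      have "1 * norm (?x - ?y) \<le> \<kappa> * norm (?x - ?y)" using kappa by (intro mult_right_mono) auto
      thus "norm (?x - ?y) + \<kappa> * norm (?x - ?y) \<le> 2 * \<kappa> * norm (?x - ?y)" by simp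
    qed (use G0 R0 in simp)
    finally show ?thesis by (simp add: mult_ac)
  qed
  have "(\<Sum>t<T. \<bar>Fsur c A B K H M w t - c t (xK A B K H M w t) (uK A B K H M w t)\<bar>)
      \<le> (\<Sum>t<T. (G * R * (2*\<kappa>)) * norm (xK A B K H M w t - ysur A B K H M w (int t)))"
    by (rule sum_mono) (use each in auto)
  also have "\<dots> = (G * R * (2*\<kappa>)) * (\<Sum>t<T. norm (xK A B K H M w t - ysur A B K H M w (int t)))"
    by (simp add: sum_distrib_left)
  also have "\<dots> \<le> (G * R * (2*\<kappa>)) * (\<kappa>^2 * ((1-\<gamma>)^(Suc H) / \<gamma>) * ((1 + 2*kb^2*\<kappa>^3 * H) * W))"
  proof (rule mult_left_mono)
    have "0 \<le> \<kappa>^2 * ((1-\<gamma>)^(Suc H) / \<gamma>)" using gam by simp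
    thus "(\<Sum>t<T. norm (xK A B K H M w t - ysur A B K H M w (int t)))
        \<le> \<kappa>^2 * ((1-\<gamma>)^(Suc H) / \<gamma>) * ((1 + 2*kb^2*\<kappa>^3 * H) * W)"
      using sum_diff_le[of w T] E_le[of w T] unfolding W_def by (meson mult_left_mono order_trans)
    show "0 \<le> G * R * (2*\<kappa>)" using G0 R0 kappa by simp
  qed
  finally show ?thesis unfolding R_def W_def by (simp add: mult_ac)
qed

end


lemma mv_meas[measurable (raw)]:
  fixes X :: "real^'n::finite^'m::finite"
  assumes "f \<in> borel_measurable N"
  shows "(\<lambda>\<omega>. X *v f \<omega>) \<in> borel_measurable N"
proof -
  have "continuous_on UNIV (\<lambda>v. X *v v)"
    using bl_real[of X] by (simp add: linear_continuous_on)
  thus ?thesis using borel_measurable_continuous_on[OF _ assms] by blast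
qed

context
  fixes N :: "'a measure" and w :: "nat \<Rightarrow> 'a \<Rightarrow> real^'n::finite"
  assumes wm: "\<And>t. w t \<in> borel_measurable N"
begin

lemma wz_meas[measurable]: "(\<lambda>\<omega>. wz (\<lambda>s. w s \<omega>) s) \<in> borel_measurable N"
  unfolding wz_def using wm by (cases "s < 0") auto

lemma Sd_meas[measurable]: "(\<lambda>\<omega>. Sd H M (\<lambda>s. w s \<omega>) s) \<in> borel_measurable N"
  unfolding Sd_def by measurable

lemma dac_meas[measurable]:
  "f \<in> borel_measurable N \<Longrightarrow> (\<lambda>\<omega>. dac K H M (\<lambda>s. w s \<omega>) s (f \<omega>)) \<in> borel_measurable N"
  unfolding dac_eq by (intro borel_measurable_add borel_measurable_uminus mv_meas Sd_meas)

lemma xK_meas[measurable]: "(\<lambda>\<omega>. xK A B K H M (\<lambda>s. w s \<omega>) t) \<in> borel_measurable N"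
proof (induction t)
  case 0 thus ?case by simp
next
  case (Suc t)
  show ?case unfolding xK.simps using Suc wm by measurable
qed

lemma uK_meas[measurable]: "(\<lambda>\<omega>. uK A B K H M (\<lambda>s. w s \<omega>) t) \<in> borel_measurable N"
  unfolding uK_def by measurable

lemma ysur_meas[measurable]: "(\<lambda>\<omega>. ysur A B K H M (\<lambda>s. w s \<omega>) t) \<in> borel_measurable N"
  unfolding ysur_def by measurable

lemma vsur_meas[measurable]: "(\<lambda>\<omega>. vsur A B K H M (\<lambda>s. w s \<omega>) t) \<in> borel_measurable N"
  unfolding vsur_def by measurable

lemma cost_meas:
  assumes "A1 c G" and [measurable]: "f \<in> borel_measurable N" "g \<in> borel_measurable N"
  shows "(\<lambda>\<omega>. c t (f \<omega>) (g \<omega>)) \<in> borel_measurable N"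
  by (rule borel_measurable_continuous_Pair[OF assms(2,3) A1_cont[OF assms(1)]])

lemma total_meas:
  assumes "A1 c G"
  shows "(\<lambda>\<omega>. \<Sum>t<T. \<bar>Fsur c A B K H M (\<lambda>s. w s \<omega>) t
           - c t (xK A B K H M (\<lambda>s. w s \<omega>) t) (uK A B K H M (\<lambda>s. w s \<omega>) t)\<bar>) \<in> borel_measurable N"
proof -
  have [measurable]: "(\<lambda>\<omega>. Fsur c A B K H M (\<lambda>s. w s \<omega>) t) \<in> borel_measurable N" for t
    unfolding Fsur_def by (rule cost_meas[OF assms]) measurable
  have [measurable]: "(\<lambda>\<omega>. c t (xK A B K H M (\<lambda>s. w s \<omega>) t) (uK A B K H M (\<lambda>s. w s \<omega>) t)) \<in> borel_measurable N" for t
    by (rule cost_meas[OF assms]) measurable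
  show ?thesis by measurable
qed

end


lemma arith_final:
  fixes G C \<gamma> \<kappa> kb L a Tr :: real
  assumes "0 \<le> G" "0 < C" "0 < \<gamma>" "\<gamma> < 1" "1 \<le> \<kappa>" "1 \<le> kb" "1 \<le> L" "0 < Tr"
    and a: "a = C * Tr * \<gamma>^2 * (1 - \<gamma>) / (46 * kb^2 * \<kappa>^8)"
  shows "G * (8*kb^2*\<kappa>^6/\<gamma> * (2*\<kappa>) * (\<kappa>^2 * (1/Tr^2) / \<gamma>) * (8*kb^2*\<kappa>^3*L/\<gamma>)) * a^2
         \<le> 2 * G * C^2 * L^2"
proof -
  have eq: "(8*kb^2*\<kappa>^6/\<gamma> * (2*\<kappa>) * (\<kappa>^2 * (1/Tr^2) / \<gamma>) * (8*kb^2*\<kappa>^3*L/\<gamma>)) * a^2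
      = C^2 * L * ((128/2116) * (\<gamma> * (1-\<gamma>)^2 / \<kappa>^4))"
    unfolding a using assms by (simp add: field_simps power2_eq_square power_mult_distrib eval_nat_numeral)
  have p1: "(1-\<gamma>)^2 \<le> 1" using assms by (intro power_le_one) auto
  have g1: "\<gamma> * (1-\<gamma>)^2 \<le> 1" using assms p1 by (intro mult_le_one) auto
  have k4: "1 \<le> \<kappa>^4" using assms by simp
  have "\<gamma> * (1-\<gamma>)^2 / \<kappa>^4 \<le> 1" using g1 k4 by (simp add: divide_le_eq)
  moreover have "0 \<le> \<gamma> * (1-\<gamma>)^2 / \<kappa>^4" using assms by simp
  ultimately have "(128/2116) * (\<gamma> * (1-\<gamma>)^2 / \<kappa>^4) \<le> 1" by simp
  hence "C^2 * L * ((128/2116) * (\<gamma> * (1-\<gamma>)^2 / \<kappa>^4)) \<le> C^2 * L * 1"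
    using assms by (intro mult_left_mono) auto
  also have "\<dots> \<le> C^2 * L^2 * 2" using assms by (simp add: power2_eq_square)
  finally have "(8*kb^2*\<kappa>^6/\<gamma> * (2*\<kappa>) * (\<kappa>^2 * (1/Tr^2) / \<gamma>) * (8*kb^2*\<kappa>^3*L/\<gamma>)) * a^2 \<le> C^2 * L^2 * 2"
    using eq by simp
  hence "G * ((8*kb^2*\<kappa>^6/\<gamma> * (2*\<kappa>) * (\<kappa>^2 * (1/Tr^2) / \<gamma>) * (8*kb^2*\<kappa>^3*L/\<gamma>)) * a^2) \<le> G * (C^2 * L^2 * 2)"
    using assms by (intro mult_left_mono) auto
  thus ?thesis by (simp add: mult_ac)
qed


theorem lemma2:
  fixes \<Omega> :: "'a measure"
    and w :: "nat \<Rightarrow> 'a \<Rightarrow> real^'n::finite"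
    and A :: "real^'n^'n" and B :: "real^'m::finite^'n" and K :: "real^'n^'m"
    and c :: "nat \<Rightarrow> real^'n \<Rightarrow> real^'m \<Rightarrow> real"
    and M :: "int \<Rightarrow> nat \<Rightarrow> real^'n^'m"
    and G\<^sub>c \<sigma>\<^sub>w \<kappa> \<gamma> C :: real and T H :: nat
  assumes "prob_space \<Omega>"
    and "\<And>t. w t \<in> borel_measurable \<Omega>"
    and A1: "A1 c G\<^sub>c"
    and A2: "\<And>t. integrable \<Omega> (\<lambda>\<omega>. norm (w t \<omega>)) \<and> (\<integral>\<omega>. norm (w t \<omega>) \<partial>\<Omega>) \<le> \<sigma>\<^sub>w"
    and "strongly_stable A B K \<kappa> \<gamma>"
    and "T \<ge> 3"
    and "H = nat \<lceil>2 / \<gamma> * ln (real T)\<rceil>"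
    and "\<And>t. M t \<in> Mset B \<kappa> \<gamma> H"
    and "C > 0"
  shows "measure \<Omega> {\<omega> \<in> space \<Omega>.
           (\<Sum>t<T. \<bar>Fsur c A B K H M (\<lambda>s. w s \<omega>) t
                   - c t (xK A B K H M (\<lambda>s. w s \<omega>) t) (uK A B K H M (\<lambda>s. w s \<omega>) t)\<bar>)
           \<le> 2 * G\<^sub>c * C^2 * (ln (real T))^2}
         \<ge> 1 - 46 * \<sigma>\<^sub>w * kappaB B ^ 2 * \<kappa>^8 / (C * \<gamma>^2 * (1 - \<gamma>))"
proof -
  note ps = assms(1) and wm = assms(2) and ss = assms(5) and T3 = assms(6) and Hdef = assms(7)
    and MM = assms(8) and C0 = assms(9)
  interpret P: prob_space \<Omega> by (rule ps)
  define kb where "kb = kappaB B"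
  define L where "L = ln (real T)"
  have sfacts: "\<kappa> \<ge> 1 \<and> 0 < \<gamma> \<and> \<gamma> < 1 \<and> mnorm K \<le> \<kappa>"
    using ss unfolding strongly_stable_def by blast
  hence kap: "\<kappa> \<ge> 1" and gam: "0 < \<gamma>" "\<gamma> < 1" and Kn: "mnorm K \<le> \<kappa>" by auto
  have kb1: "kb \<ge> 1" "mnorm B \<le> kb" unfolding kb_def kappaB_def by auto
  have Mn: "mnorm (M s i) \<le> 2*kb*\<kappa>^3" if "i < H" for s i
  proof -
    have "mnorm (M s i) \<le> 2 * kb * \<kappa>^3 * (1 - \<gamma>)^i"
      using MM[of s] that unfolding Mset_def kb_def by auto
    also have "\<dots> \<le> 2 * kb * \<kappa>^3 * 1"
      using gam kb1 kap by (intro mult_left_mono power_le_one) auto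
    finally show ?thesis by simp
  qed
  interpret C: ctx A B K H M \<kappa> \<gamma> kb
    using kap gam kb1 Kn Mn mpow_stable[OF ss] by unfold_locales auto
  have G0: "0 \<le> G\<^sub>c" using A1 unfolding A1_def by simp
  have Tpos: "0 < real T" using T3 by simp
  have L1: "1 \<le> L"
  proof -
    have "(1::real) = ln (exp 1)" by simp
    also have "\<dots> \<le> ln 3" using exp_le by (subst ln_le_cancel_iff) auto
    also have "\<dots> \<le> L" unfolding L_def using T3 by (subst ln_le_cancel_iff) auto
    finally show ?thesis .
  qed
  have Hge: "2 / \<gamma> * L \<le> real H" unfolding Hdef L_def by (rule real_nat_ceiling_ge)
  have Hle: "real H \<le> 2 / \<gamma> * L + 1"
  proof -
    have "0 \<le> 2 / \<gamma> * L" using gam L1 by simp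
    hence "real H = real_of_int \<lceil>2 / \<gamma> * L\<rceil>" unfolding Hdef L_def by simp
    also have "\<dots> \<le> 2 / \<gamma> * L + 1" by (rule of_int_ceiling_le_add_one)
    finally show ?thesis .
  qed
  have pw: "(1-\<gamma>)^(Suc H) \<le> 1 / (real T)^2"
  proof -
    have "(1-\<gamma>)^(Suc H) \<le> (1-\<gamma>)^H" using gam by (intro power_decreasing) auto
    also have "(1-\<gamma>)^H = exp (real H * ln (1-\<gamma>))"
      using gam by (simp add: exp_of_nat_mult)
    also have "\<dots> \<le> exp (- 2 * L)"
    proof (subst exp_le_cancel_iff)
      have "ln (1-\<gamma>) \<le> -\<gamma>" using ln_le_minus_one[of "1-\<gamma>"] gam by simp
      hence "real H * ln (1-\<gamma>) \<le> real H * (-\<gamma>)" by (intro mult_left_mono) auto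
      also have "\<dots> \<le> (2 / \<gamma> * L) * (-\<gamma>)" using Hge gam by (intro mult_right_mono_neg) auto
      also have "\<dots> = -2 * L" using gam by simp
      finally show "real H * ln (1-\<gamma>) \<le> -2 * L" .
    qed
    also have "exp (-2 * L) = 1 / (real T)^2"
    proof -
      have eL: "exp L = real T" unfolding L_def using Tpos by simp
      have "exp (2 * L) = exp L * exp L" by (metis exp_add mult_2)
      hence e2: "exp (2 * L) = real T * real T" using eL by simp
      have "exp (-2 * L) = inverse (exp (2 * L))" using exp_minus[of "2*L"] by simp
      thus ?thesis using e2 by (simp add: power2_eq_square inverse_eq_divide)
    qed
    finally show ?thesis .
  qed
  have hH: "1 + 2*kb^2*\<kappa>^3 * real H \<le> 8*kb^2*\<kappa>^3*L/\<gamma>"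
  proof -
    have ka: "1 \<le> kb^2" by (rule one_le_power) (use kb1 in auto)
    have kbb: "1 \<le> \<kappa>^3" by (rule one_le_power) (use kap in auto)
    have "1*1 \<le> kb^2*\<kappa>^3" by (rule mult_mono) (use ka kbb in auto)
    hence k: "1 \<le> kb^2*\<kappa>^3" by simp
    have "1 + 2*kb^2*\<kappa>^3 * real H \<le> 2*kb^2*\<kappa>^3 + 2*kb^2*\<kappa>^3 * real H" using k by simp
    also have "\<dots> = 2*kb^2*\<kappa>^3 * (real H + 1)" by (simp add: algebra_simps)
    also have "real H + 1 \<le> 4 * L / \<gamma>"
    proof -
      have "1 \<le> L / \<gamma>" using L1 gam by (simp add: le_divide_eq)
      thus ?thesis using Hle by simp
    qed
    hence "2*kb^2*\<kappa>^3 * (real H + 1) \<le> 2*kb^2*\<kappa>^3 * (4 * L / \<gamma>)" using k kap by (intro mult_left_mono) auto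
    finally show ?thesis by simp
  qed
  define X where "X = 8*kb^2*\<kappa>^6/\<gamma> * (2*\<kappa>) * (\<kappa>^2 * ((1-\<gamma>)^(Suc H) / \<gamma>)) * (1 + 2*kb^2*\<kappa>^3 * H)"
  define Y where "Y = 8*kb^2*\<kappa>^6/\<gamma> * (2*\<kappa>) * (\<kappa>^2 * (1/(real T)^2) / \<gamma>) * (8*kb^2*\<kappa>^3*L/\<gamma>)"
  have X0: "0 \<le> X" unfolding X_def using gam kap by simp
  have XY: "X \<le> Y"
  proof -
    have n1: "0 \<le> 8*kb^2*\<kappa>^6/\<gamma> * (2*\<kappa>)" using gam kap by simp
    have p: "\<kappa>^2 * ((1-\<gamma>)^(Suc H) / \<gamma>) \<le> \<kappa>^2 * (1/(real T)^2) / \<gamma>"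
    proof -
      have "(1-\<gamma>)^(Suc H) / \<gamma> \<le> (1/(real T)^2) / \<gamma>" using pw gam by (intro divide_right_mono) auto
      hence "\<kappa>^2 * ((1-\<gamma>)^(Suc H) / \<gamma>) \<le> \<kappa>^2 * ((1/(real T)^2) / \<gamma>)" by (intro mult_left_mono) auto
      thus ?thesis by simp
    qed
    have n2: "0 \<le> \<kappa>^2 * ((1-\<gamma>)^(Suc H) / \<gamma>)" using gam by simp
    have n3: "0 \<le> 1 + 2*kb^2*\<kappa>^3 * real H" using kap kb1 by simp
    have ab: "8*kb^2*\<kappa>^6/\<gamma> * (2*\<kappa>) * (\<kappa>^2 * ((1-\<gamma>)^(Suc H) / \<gamma>))
        \<le> 8*kb^2*\<kappa>^6/\<gamma> * (2*\<kappa>) * (\<kappa>^2 * (1/(real T)^2) / \<gamma>)"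
      by (rule mult_left_mono[OF p n1])
    have b0: "0 \<le> 8*kb^2*\<kappa>^6/\<gamma> * (2*\<kappa>) * (\<kappa>^2 * (1/(real T)^2) / \<gamma>)"
      using gam kap by simp
    show ?thesis unfolding X_def Y_def by (rule mult_mono[OF ab hH b0 n3])
  qed
  define a where "a = C * real T * \<gamma>^2 * (1 - \<gamma>) / (46 * kb^2 * \<kappa>^8)"
  have a0: "0 < a" unfolding a_def using C0 Tpos gam kap kb1 by simp
  have fin: "G\<^sub>c * Y * a^2 \<le> 2 * G\<^sub>c * C^2 * L^2"
    unfolding Y_def using arith_final[OF G0 C0 gam kap kb1(1) L1 Tpos a_def] .
  define Z where "Z = (\<lambda>\<omega>. \<Sum>s<T. norm (w s \<omega>))"
  let ?S = "{\<omega> \<in> space \<Omega>.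
           (\<Sum>t<T. \<bar>Fsur c A B K H M (\<lambda>s. w s \<omega>) t
                   - c t (xK A B K H M (\<lambda>s. w s \<omega>) t) (uK A B K H M (\<lambda>s. w s \<omega>) t)\<bar>)
           \<le> 2 * G\<^sub>c * C^2 * (ln (real T))^2}"
  let ?E = "{\<omega> \<in> space \<Omega>. Z \<omega> \<le> a}"
  have Zm[measurable]: "Z \<in> borel_measurable \<Omega>" unfolding Z_def using wm by measurable
  have Sm: "?S \<in> sets \<Omega>"
    using total_meas[OF wm A1] by measurable
  have ES: "?E \<subseteq> ?S"
  proof safe
    fix \<omega> assume \<omega>: "\<omega> \<in> space \<Omega>" "Z \<omega> \<le> a"
    have Z0: "0 \<le> Z \<omega>" unfolding Z_def by (simp add: sum_nonneg)
    have "(\<Sum>t<T. \<bar>Fsur c A B K H M (\<lambda>s. w s \<omega>) t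
             - c t (xK A B K H M (\<lambda>s. w s \<omega>) t) (uK A B K H M (\<lambda>s. w s \<omega>) t)\<bar>)
        \<le> G\<^sub>c * X * (Z \<omega>)^2"
      using C.det_bound[OF A1, of "\<lambda>s. w s \<omega>" T] unfolding X_def Z_def
      by (simp add: power2_eq_square mult_ac)
    also have "\<dots> \<le> G\<^sub>c * Y * a^2"
      using G0 X0 XY Z0 \<omega>(2) by (intro mult_mono power_mono) auto
    also have "\<dots> \<le> 2 * G\<^sub>c * C^2 * (ln (real T))^2" using fin unfolding L_def .
    finally show "(\<Sum>t<T. \<bar>Fsur c A B K H M (\<lambda>s. w s \<omega>) t
             - c t (xK A B K H M (\<lambda>s. w s \<omega>) t) (uK A B K H M (\<lambda>s. w s \<omega>) t)\<bar>)
        \<le> 2 * G\<^sub>c * C^2 * (ln (real T))^2" .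
  qed
  have Zint: "integrable \<Omega> Z" unfolding Z_def by (rule Bochner_Integration.integrable_sum) (use A2 in auto)
  have EZ: "(\<integral>\<omega>. Z \<omega> \<partial>\<Omega>) \<le> real T * \<sigma>\<^sub>w"
  proof -
    have "(\<integral>\<omega>. Z \<omega> \<partial>\<Omega>) = (\<Sum>s<T. \<integral>\<omega>. norm (w s \<omega>) \<partial>\<Omega>)"
      unfolding Z_def by (rule Bochner_Integration.integral_sum) (use A2 in auto)
    also have "\<dots> \<le> (\<Sum>s<T. \<sigma>\<^sub>w)" using A2 by (intro sum_mono) auto
    finally show ?thesis by simp
  qed
  have mk: "measure \<Omega> {\<omega>\<in>space \<Omega>. Z \<omega> \<ge> a} \<le> (\<integral>\<omega>. Z \<omega> \<partial>\<Omega>) / a"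
    by (rule integral_Markov_inequality_measure[OF Zint _ _ a0, of "space \<Omega>"])
       (auto simp: Z_def sum_nonneg)
  have mE: "measure \<Omega> ?E = 1 - measure \<Omega> {\<omega>\<in>space \<Omega>. a < Z \<omega>}"
  proof -
    have "?E = space \<Omega> - {\<omega>\<in>space \<Omega>. a < Z \<omega>}" by auto
    thus ?thesis using P.prob_compl[of "{\<omega>\<in>space \<Omega>. a < Z \<omega>}"] by simp
  qed
  have "measure \<Omega> {\<omega>\<in>space \<Omega>. a < Z \<omega>} \<le> measure \<Omega> {\<omega>\<in>space \<Omega>. Z \<omega> \<ge> a}"
    by (intro P.finite_measure_mono) auto
  also have "\<dots> \<le> real T * \<sigma>\<^sub>w / a" using mk EZ a0 by (meson divide_right_mono less_imp_le order_trans)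
  also have "real T * \<sigma>\<^sub>w / a = 46 * \<sigma>\<^sub>w * kappaB B ^ 2 * \<kappa>^8 / (C * \<gamma>^2 * (1 - \<gamma>))"
    unfolding a_def kb_def using Tpos C0 gam kap by (simp add: field_simps)
  finally have "1 - 46 * \<sigma>\<^sub>w * kappaB B ^ 2 * \<kappa>^8 / (C * \<gamma>^2 * (1 - \<gamma>)) \<le> measure \<Omega> ?E"
    unfolding mE by simp
  also have "measure \<Omega> ?E \<le> measure \<Omega> ?S" by (rule P.finite_measure_mono[OF ES Sm])
  finally show ?thesis .
qed


end
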